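(* Let $G$ be a directed graph and let $T$ be an out-directed tree which is not (isomorphic to) a subgraph of $G$. Then there is a partition $\{U,X,Y\}$ of $V(G)$ (parts possibly empty) such that $U$ is the vertex set of a subgraph of $G$ isomorphic to a subtree of $T$, $|X|=|Y|$, and every vertex in $X$ has fewer than $|T|$ out-neighbours in $Y$.
   Context: An out-directed tree is an oriented tree (underlying graph a tree, no bidirected edges) having a vertex $r$, the root, such that every edge is directed away from $r$. A subtree is a connected subgraph of the tree. $|T|$ is the number of vertices of $T$. *)

theory Defs
  imports Main
begin

definition digraph :: "'a set \<Rightarrow> ('a \<times> 'a) set \<Rightarrow> bool" where
  "digraph V E \<longleftrightarrow> finite V \<and> E \<subseteq> V \<times> V \<and> (\<forall>v. (v, v) \<notin> E)"

definition adj :: "('a \<times> 'a) set \<Rightarrow> 'a \<Rightarrow> 'a \<Rightarrow> bool" where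
  "adj E u v \<longleftrightarrow> (u, v) \<in> E \<or> (v, u) \<in> E"

definition ug_connected :: "'a set \<Rightarrow> ('a \<times> 'a) set \<Rightarrow> bool" where
  "ug_connected V E \<longleftrightarrow>
     (\<forall>u\<in>V. \<forall>v\<in>V. ((u, v) \<in> ({(x, y). adj E x y} \<inter> (V \<times> V))\<^sup>*))"

definition ug_has_cycle :: "'a set \<Rightarrow> ('a \<times> 'a) set \<Rightarrow> bool" where
  "ug_has_cycle V E \<longleftrightarrow>
     (\<exists>cs. length cs \<ge> 3 \<and> distinct cs \<and> set cs \<subseteq> V \<and>
        (\<forall>i. Suc i < length cs \<longrightarrow> adj E (cs ! i) (cs ! Suc i)) \<and>
        adj E (last cs) (hd cs))"

definition oriented_tree :: "'b set \<Rightarrow> ('b \<times> 'b) set \<Rightarrow> bool" where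
  "oriented_tree V E \<longleftrightarrow> digraph V E \<and> V \<noteq> {} \<and> ug_connected V E \<and> \<not> ug_has_cycle V E
     \<and> (\<forall>u v. (u, v) \<in> E \<longrightarrow> (v, u) \<notin> E)"

text \<open>Out-directed tree with root r: every edge is directed away from r, i.e. every vertex
  is reached from r by a directed path.\<close>
definition out_tree :: "'b set \<Rightarrow> ('b \<times> 'b) set \<Rightarrow> 'b \<Rightarrow> bool" where
  "out_tree V E r \<longleftrightarrow> oriented_tree V E \<and> r \<in> V \<and> (\<forall>v\<in>V. (r, v) \<in> E\<^sup>*)"

definition is_out_directed_tree :: "'b set \<Rightarrow> ('b \<times> 'b) set \<Rightarrow> bool" where
  "is_out_directed_tree V E \<longleftrightarrow> (\<exists>r. out_tree V E r)"

definition embeds_onto :: "'b set \<Rightarrow> ('b \<times> 'b) set \<Rightarrow> 'a set \<Rightarrow> ('a \<times> 'a) set \<Rightarrow> 'a set \<Rightarrow> bool" where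
  "embeds_onto W F V E U \<longleftrightarrow> U \<subseteq> V \<and>
     (\<exists>f. bij_betw f W U \<and> (\<forall>u v. (u, v) \<in> F \<longrightarrow> (f u, f v) \<in> E))"

definition is_subgraph_iso :: "'b set \<Rightarrow> ('b \<times> 'b) set \<Rightarrow> 'a set \<Rightarrow> ('a \<times> 'a) set \<Rightarrow> bool" where
  "is_subgraph_iso W F V E \<longleftrightarrow> (\<exists>U. embeds_onto W F V E U)"

definition subtree :: "'b set \<Rightarrow> ('b \<times> 'b) set \<Rightarrow> 'b set \<Rightarrow> ('b \<times> 'b) set \<Rightarrow> bool" where
  "subtree W F VT ET \<longleftrightarrow> W \<subseteq> VT \<and> F \<subseteq> ET \<and> F \<subseteq> W \<times> W \<and> ug_connected W F"

end

theory Submission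
  imports Defs
begin

lemma walk_of_rtrancl:
  assumes "(x, y) \<in> R\<^sup>*"
  shows "\<exists>xs. xs \<noteq> [] \<and> hd xs = x \<and> last xs = y \<and> successively (\<lambda>u v. (u, v) \<in> R) xs"
  using assms
proof (induction rule: rtrancl_induct)
  case base
  then show ?case by (intro exI[of _ "[x]"]) auto
next
  case (step y z)
  then obtain xs where xs: "xs \<noteq> []" "hd xs = x" "last xs = y" "successively (\<lambda>u v. (u, v) \<in> R) xs"
    by blast
  show ?case
    by (intro exI[of _ "xs @ [z]"]) (use xs step in \<open>auto simp: successively_append_iff\<close>)
qed

lemma shorten_walk:
  "successively P ws \<Longrightarrow> ws \<noteq> [] \<Longrightarrow> \<exists>ds. successively P ds \<and> distinct ds \<and> ds \<noteq> []
      \<and> hd ds = hd ws \<and> last ds = last ws \<and> set ds \<subseteq> set ws"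
proof (induction ws rule: length_induct)
  case (1 ws)
  show ?case
  proof (cases "distinct ws")
    case True
    then show ?thesis using 1 by blast
  next
    case False
    then obtain xs ys zs y where ws: "ws = xs @ [y] @ ys @ [y] @ zs"
      using not_distinct_decomp by blast
    let ?v = "xs @ [y] @ zs"
    have "length ?v < length ws" using ws by simp
    moreover have "successively P ?v"
      using "1.prems"(1) unfolding ws
      by (auto simp: successively_append_iff successively_Cons split: if_splits)
    moreover have "?v \<noteq> []" by simp
    ultimately obtain ds where ds: "successively P ds" "distinct ds" "ds \<noteq> []"
      "hd ds = hd ?v" "last ds = last ?v" "set ds \<subseteq> set ?v"
      using "1.IH" by blast
    have "hd ?v = hd ws" using ws by (cases xs) auto
    moreover have "last ?v = last ws" using ws by (cases zs) auto
    moreover have "set ?v \<subseteq> set ws" using ws by auto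
    ultimately show ?thesis using ds by auto
  qed
qed

lemma walk_set:
  "successively (\<lambda>u v. (u, v) \<in> R) ds \<Longrightarrow> R \<subseteq> S \<times> S \<Longrightarrow> ds \<noteq> [] \<Longrightarrow> hd ds \<in> S \<Longrightarrow> set ds \<subseteq> S"
proof (induction ds)
  case Nil then show ?case by simp
next
  case (Cons x xs)
  then show ?case by (cases xs) (auto simp: successively_Cons)
qed

lemma no_back_path:
  assumes ot: "oriented_tree VT ET" and xb: "(x, b) \<in> ET" and p: "(b, x) \<in> ET\<^sup>*"
  shows False
proof -
  have dg: "digraph VT ET" using ot by (simp add: oriented_tree_def)
  have sub: "ET \<subseteq> VT \<times> VT" and nl: "\<And>v. (v, v) \<notin> ET" using dg by (auto simp: digraph_def)
  have xne: "x \<noteq> b" using xb nl by blast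
  have bV: "b \<in> VT" using xb sub by blast
  obtain xs where xs: "xs \<noteq> []" "hd xs = b" "last xs = x" "successively (\<lambda>u v. (u, v) \<in> ET) xs"
    using walk_of_rtrancl[OF p] by blast
  obtain ds where ds: "successively (\<lambda>u v. (u, v) \<in> ET) ds" "distinct ds" "ds \<noteq> []"
      "hd ds = b" "last ds = x"
    using shorten_walk[OF xs(4) xs(1)] xs by metis
  have setds: "set ds \<subseteq> VT" using walk_set[OF ds(1) sub ds(3)] ds bV by simp
  have "length ds \<noteq> 1" using ds xne by (cases ds) auto
  moreover have "length ds > 0" using ds(3) by simp
  ultimately have l2: "length ds \<ge> 2" by arith
  show False
  proof (cases "length ds = 2")
    case True
    then obtain p q where "ds = [p, q]" by (cases ds; cases "tl ds") auto
    then have "(b, x) \<in> ET" using ds by simp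
    then show False using xb ot by (auto simp: oriented_tree_def)
  next
    case False
    have "ug_has_cycle VT ET"
      unfolding ug_has_cycle_def
    proof (intro exI[of _ ds] conjI allI impI)
      show "3 \<le> length ds" using l2 False by simp
      show "distinct ds" by fact
      show "set ds \<subseteq> VT" by fact
      fix i assume "Suc i < length ds"
      then show "adj ET (ds ! i) (ds ! Suc i)"
        using successively_nth[OF ds(1)] by (auto simp: adj_def)
    next
      show "adj ET (last ds) (hd ds)" using ds xb by (simp add: adj_def)
    qed
    then show False using ot by (simp add: oriented_tree_def)
  qed
qed

lemma root_no_in:
  assumes "out_tree VT ET r" shows "(u, r) \<notin> ET"
proof
  assume ur: "(u, r) \<in> ET"
  have ot: "oriented_tree VT ET" using assms by (simp add: out_tree_def)
  have "u \<in> VT" using ot ur by (auto simp: oriented_tree_def digraph_def)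
  then have "(r, u) \<in> ET\<^sup>*" using assms by (simp add: out_tree_def)
  then show False using no_back_path[OF ot ur] by blast
qed

lemma avoid_path:
  assumes "(r, a) \<in> ET\<^sup>*"
  shows "(b, a) \<in> ET\<^sup>* \<or> (r, a) \<in> {(x, y). (x, y) \<in> ET \<and> x \<noteq> b \<and> y \<noteq> b}\<^sup>*"
  using assms
proof (induction rule: rtrancl_induct)
  case base then show ?case by simp
next
  case (step y z)
  show ?case
  proof (cases "(b, y) \<in> ET\<^sup>*")
    case True then show ?thesis using step by (meson rtrancl.rtrancl_into_rtrancl)
  next
    case nby: False
    then have yA: "(r, y) \<in> {(x, y). (x, y) \<in> ET \<and> x \<noteq> b \<and> y \<noteq> b}\<^sup>*" using step by blast
    show ?thesis
    proof (cases "z = b")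
      case True then show ?thesis by simp
    next
      case False
      have "y \<noteq> b" using nby by auto
      then show ?thesis using yA False step(2)
        by (metis (mono_tags, lifting) case_prodI mem_Collect_eq rtrancl.rtrancl_into_rtrancl)
    qed
  qed
qed

lemma indeg_le1:
  assumes ot_r: "out_tree VT ET r" and ab: "(a, b) \<in> ET" and cb: "(c, b) \<in> ET"
  shows "a = c"
proof (rule ccontr)
  assume ac: "a \<noteq> c"
  have ot: "oriented_tree VT ET" using ot_r by (simp add: out_tree_def)
  have dg: "digraph VT ET" using ot by (simp add: oriented_tree_def)
  have sub: "ET \<subseteq> VT \<times> VT" and nl: "\<And>v. (v, v) \<notin> ET" using dg by (auto simp: digraph_def)
  have aV: "a \<in> VT" and cV: "c \<in> VT" and bV: "b \<in> VT" using ab cb sub by auto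
  have ra: "(r, a) \<in> ET\<^sup>*" and rc: "(r, c) \<in> ET\<^sup>*" using ot_r aV cV by (auto simp: out_tree_def)
  have nba: "(b, a) \<notin> ET\<^sup>*" using no_back_path[OF ot ab] by blast
  have nbc: "(b, c) \<notin> ET\<^sup>*" using no_back_path[OF ot cb] by blast
  define A' where "A' = {(x, y). (x, y) \<in> ET \<and> x \<noteq> b \<and> y \<noteq> b}"
  define A where "A = {(x, y). adj ET x y \<and> x \<in> VT - {b} \<and> y \<in> VT - {b}}"
  have "A' \<subseteq> A" using sub unfolding A'_def A_def adj_def by auto
  hence AA: "A'\<^sup>* \<subseteq> A\<^sup>*" by (rule rtrancl_mono)
  have "(r, a) \<in> A'\<^sup>*" using avoid_path[OF ra, of b] nba unfolding A'_def by blast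
  hence raA: "(r, a) \<in> A\<^sup>*" using AA by blast
  have "(r, c) \<in> A'\<^sup>*" using avoid_path[OF rc, of b] nbc unfolding A'_def by blast
  hence rcA: "(r, c) \<in> A\<^sup>*" using AA by blast
  have symA: "sym A" unfolding A_def sym_def adj_def by auto
  have "(a, r) \<in> A\<^sup>*" using raA symA
    by (metis rtrancl_converseI sym_conv_converse_eq)
  hence acA: "(a, c) \<in> A\<^sup>*" using rcA by simp
  obtain xs where xs: "xs \<noteq> []" "hd xs = a" "last xs = c" "successively (\<lambda>u v. (u, v) \<in> A) xs"
    using walk_of_rtrancl[OF acA] by blast
  obtain ds where ds: "successively (\<lambda>u v. (u, v) \<in> A) ds" "distinct ds" "ds \<noteq> []"
      "hd ds = a" "last ds = c"
    using shorten_walk[OF xs(4) xs(1)] xs by metis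
  have "A \<subseteq> (VT - {b}) \<times> (VT - {b})" unfolding A_def by auto
  moreover have "a \<noteq> b" using ab nl by blast
  ultimately have setds: "set ds \<subseteq> VT - {b}" using walk_set[OF ds(1) _ ds(3)] ds aV by simp
  have "length ds \<noteq> 1" using ds ac by (cases ds) auto
  moreover have "length ds > 0" using ds(3) by simp
  ultimately have l2: "length ds \<ge> 2" by arith
  have sadj: "successively (adj ET) ds"
    using ds(1) by (rule successively_mono) (auto simp: A_def)
  have sadj2: "successively (adj ET) (ds @ [b])"
    using sadj ds cb by (auto simp: successively_append_iff adj_def)
  have "ug_has_cycle VT ET"
    unfolding ug_has_cycle_def
  proof (intro exI[of _ "ds @ [b]"] conjI allI impI)
    show "3 \<le> length (ds @ [b])" using l2 by simp
    show "distinct (ds @ [b])" using ds(2) setds by auto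
    show "set (ds @ [b]) \<subseteq> VT" using setds bV by auto
    fix i assume "Suc i < length (ds @ [b])"
    then show "adj ET ((ds @ [b]) ! i) ((ds @ [b]) ! Suc i)"
      using successively_nth[OF sadj2] by blast
  next
    show "adj ET (last (ds @ [b])) (hd (ds @ [b]))" using ds ab by (simp add: adj_def)
  qed
  then show False using ot by (simp add: oriented_tree_def)
qed

lemma exit_arc:
  assumes "(r, v) \<in> ET\<^sup>*" "r \<in> W" "v \<notin> W"
  shows "\<exists>a b. (a, b) \<in> ET \<and> a \<in> W \<and> b \<notin> W"
  using assms by (induction rule: rtrancl_induct) auto

lemma conn_ext:
  assumes "ug_connected W F" "a \<in> W" "F \<subseteq> F'" "(a, b) \<in> F'"
  shows "ug_connected (insert b W) F'"
proof -
  let ?R = "{(x, y). adj F x y} \<inter> (W \<times> W)"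
  let ?R' = "{(x, y). adj F' x y} \<inter> (insert b W \<times> insert b W)"
  have "?R \<subseteq> ?R'" using assms(3) by (auto simp: adj_def)
  hence RR: "?R\<^sup>* \<subseteq> ?R'\<^sup>*" by (rule rtrancl_mono)
  have ab: "(a, b) \<in> ?R'" and ba: "(b, a) \<in> ?R'" using assms(2,4) by (auto simp: adj_def)
  show ?thesis unfolding ug_connected_def
  proof (intro ballI)
    fix u v assume u: "u \<in> insert b W" and v: "v \<in> insert b W"
    have W: "\<And>u v. u \<in> W \<Longrightarrow> v \<in> W \<Longrightarrow> (u, v) \<in> ?R'\<^sup>*"
      using assms(1) RR unfolding ug_connected_def by blast
    have ub: "\<And>u. u \<in> W \<Longrightarrow> (u, b) \<in> ?R'\<^sup>*"
      using W[OF _ assms(2)] ab by (meson rtrancl.rtrancl_into_rtrancl)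
    have bu: "\<And>u. u \<in> W \<Longrightarrow> (b, u) \<in> ?R'\<^sup>*"
      using W[OF assms(2)] ba by (meson converse_rtrancl_into_rtrancl)
    show "(u, v) \<in> ?R'\<^sup>*" using u v W ub bu by auto
  qed
qed

definition concl :: "'a set \<Rightarrow> ('a \<times> 'a) set \<Rightarrow> 'b set \<Rightarrow> ('b \<times> 'b) set \<Rightarrow> bool" where
  "concl V E VT ET \<longleftrightarrow> (\<exists>U X Y. U \<union> X \<union> Y = V \<and> U \<inter> X = {} \<and> U \<inter> Y = {} \<and> X \<inter> Y = {}
           \<and> (\<exists>W F. subtree W F VT ET \<and> embeds_onto W F V E U)
           \<and> card X = card Y
           \<and> (\<forall>x\<in>X. card {y\<in>Y. (x, y) \<in> E} < card VT))"

definition goodX :: "'a set \<Rightarrow> ('a \<times> 'a) set \<Rightarrow> 'b set \<Rightarrow> 'a set \<Rightarrow> bool" where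
  "goodX V E VT X \<longleftrightarrow> X \<subseteq> V \<and> (\<forall>x\<in>X. card {y\<in>V - X. (x, y) \<in> E} < card VT) \<and> 2 * card X \<le> card V"

definition state :: "'a set \<Rightarrow> ('a \<times> 'a) set \<Rightarrow> 'b set \<Rightarrow> ('b \<times> 'b) set \<Rightarrow> 'b \<Rightarrow> 'a set \<Rightarrow> 'b set \<Rightarrow> ('b \<Rightarrow> 'a) \<Rightarrow> bool" where
  "state V E VT ET r X W f \<longleftrightarrow> W \<subseteq> VT \<and> (W \<noteq> {} \<longrightarrow> r \<in> W) \<and> (\<forall>u v. (u, v) \<in> ET \<longrightarrow> v \<in> W \<longrightarrow> u \<in> W)
     \<and> ug_connected W (ET \<inter> (W \<times> W)) \<and> inj_on f W \<and> f ` W \<subseteq> V - X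
     \<and> (\<forall>u v. (u, v) \<in> ET \<longrightarrow> u \<in> W \<longrightarrow> v \<in> W \<longrightarrow> (f u, f v) \<in> E)"

lemma finish:
  assumes dg: "digraph V E" and gx: "goodX V E VT X" and st: "state V E VT ET r X W f"
    and cw: "card W = card V - 2 * card X"
  shows "concl V E VT ET"
proof -
  have fV: "finite V" using dg by (simp add: digraph_def)
  have XV: "X \<subseteq> V" and Xc: "\<forall>x\<in>X. card {y\<in>V - X. (x, y) \<in> E} < card VT"
    and X2: "2 * card X \<le> card V" using gx by (auto simp: goodX_def)
  have inj: "inj_on f W" and UV: "f ` W \<subseteq> V - X" using st by (auto simp: state_def)
  define U where "U = f ` W"
  define Y where "Y = V - X - U"
  have cU: "card U = card W" using inj by (simp add: U_def card_image)
  have fX: "finite X" using XV fV finite_subset by blast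
  have fU: "finite U" using UV fV U_def finite_subset by blast
  have "card (V - X) = card V - card X" using XV fX by (simp add: card_Diff_subset)
  moreover have "card Y = card (V - X) - card U" unfolding Y_def
    using UV U_def fU by (simp add: card_Diff_subset)
  ultimately have cY: "card Y = card X" using cU cw X2 by simp
  show ?thesis unfolding concl_def
  proof (rule exI[of _ U], rule exI[of _ X], rule exI[of _ Y], intro conjI)
    show "U \<union> X \<union> Y = V" using UV XV U_def Y_def by auto
    show "U \<inter> X = {}" using UV U_def by auto
    show "U \<inter> Y = {}" using Y_def by auto
    show "X \<inter> Y = {}" using Y_def by auto
    show "card X = card Y" using cY by simp
    show "\<forall>x\<in>X. card {y \<in> Y. (x, y) \<in> E} < card VT"
    proof
      fix x assume x: "x \<in> X"
      have "card {y \<in> Y. (x, y) \<in> E} \<le> card {y\<in>V - X. (x, y) \<in> E}"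
        by (rule card_mono) (use fV Y_def in auto)
      then show "card {y \<in> Y. (x, y) \<in> E} < card VT" using Xc x by force
    qed
    show "\<exists>W F. subtree W F VT ET \<and> embeds_onto W F V E U"
    proof (intro exI[of _ W] exI[of _ "ET \<inter> (W \<times> W)"] conjI)
      show "subtree W (ET \<inter> W \<times> W) VT ET" using st by (auto simp: state_def subtree_def)
      show "embeds_onto W (ET \<inter> W \<times> W) V E U" unfolding embeds_onto_def
        using st UV U_def inj by (auto intro!: exI[of _ f] simp: state_def inj_on_imp_bij_betw bij_betw_def)
    qed
  qed
qed

lemma inner:
  assumes dg: "digraph V E" and otr: "out_tree VT ET r" and noiso: "\<not> is_subgraph_iso VT ET V E"
    and gx: "goodX V E VT X"
    and IHX: "\<And>X'. goodX V E VT X' \<Longrightarrow> card (V - X') < card (V - X) \<Longrightarrow> concl V E VT ET"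
  shows "state V E VT ET r X W f \<Longrightarrow> card W \<le> card V - 2 * card X \<Longrightarrow> concl V E VT ET"
proof (induction "card V - 2 * card X - card W" arbitrary: W f rule: less_induct)
  case less
  note st = less.prems(1) and cle = less.prems(2)
  have ot: "oriented_tree VT ET" using otr by (simp add: out_tree_def)
  have dgT: "digraph VT ET" using ot by (simp add: oriented_tree_def)
  have fVT: "finite VT" and sub: "ET \<subseteq> VT \<times> VT" and nl: "\<And>v. (v, v) \<notin> ET"
    using dgT by (auto simp: digraph_def)
  have rV: "r \<in> VT" using otr by (simp add: out_tree_def)
  have fV: "finite V" using dg by (simp add: digraph_def)
  have XV: "X \<subseteq> V" and Xc: "\<forall>x\<in>X. card {y\<in>V - X. (x, y) \<in> E} < card VT"
    and X2: "2 * card X \<le> card V" using gx by (auto simp: goodX_def)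
  have fX: "finite X" using XV fV finite_subset by blast
  have cVX: "card (V - X) = card V - card X" using XV fX by (simp add: card_Diff_subset)
  have WVT: "W \<subseteq> VT" and inj: "inj_on f W" and fW: "f ` W \<subseteq> V - X"
    and anc: "\<forall>u v. (u, v) \<in> ET \<longrightarrow> v \<in> W \<longrightarrow> u \<in> W"
    and arcs: "\<forall>u v. (u, v) \<in> ET \<longrightarrow> u \<in> W \<longrightarrow> v \<in> W \<longrightarrow> (f u, f v) \<in> E"
    and conn: "ug_connected W (ET \<inter> (W \<times> W))"
    and rW: "W \<noteq> {} \<longrightarrow> r \<in> W"
    using st by (auto simp: state_def)
  have fWfin: "finite W" using WVT fVT finite_subset by blast
  show ?case
  proof (cases "card W = card V - 2 * card X")
    case True
    then show ?thesis using finish[OF dg gx st] by simp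
  next
    case False
    hence lt: "card W < card V - 2 * card X" using cle by simp
    show ?thesis
    proof (cases "W = {}")
      case True
      have "card (V - X) > 0" using lt cVX by simp
      then obtain v where v: "v \<in> V - X" by (metis card_gt_0_iff ex_in_conv)
      have st': "state V E VT ET r X {r} (\<lambda>_. v)"
        unfolding state_def
      proof (intro conjI allI impI)
        show "{r} \<subseteq> VT" using rV by simp
        show "r \<in> {r}" by simp
        fix u w assume "(u, w) \<in> ET" "w \<in> {r}"
        then show "u \<in> {r}" using root_no_in[OF otr] by blast
      next
        show "ug_connected {r} (ET \<inter> {r} \<times> {r})" by (simp add: ug_connected_def)
        show "inj_on (\<lambda>_. v) {r}" by simp
        show "(\<lambda>_. v) ` {r} \<subseteq> V - X" using v by simp
        fix u w assume "(u, w) \<in> ET" "u \<in> {r}" "w \<in> {r}"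
        then show "(v, v) \<in> E" using nl by blast
      qed
      show ?thesis
        by (rule less.hyps[OF _ st']) (use True lt in auto)
    next
      case Wne: False
      hence rW': "r \<in> W" using rW by blast
      show ?thesis
      proof (cases "W = VT")
        case True
        have "embeds_onto VT ET V E (f ` VT)" unfolding embeds_onto_def
          using True fW inj arcs sub by (auto intro!: exI[of _ f] simp: inj_on_imp_bij_betw)
        then show ?thesis using noiso by (auto simp: is_subgraph_iso_def)
      next
        case False
        then obtain v where v: "v \<in> VT" "v \<notin> W" using WVT by blast
        have "(r, v) \<in> ET\<^sup>*" using otr v by (simp add: out_tree_def)
        then obtain a b where ab: "(a, b) \<in> ET" "a \<in> W" "b \<notin> W"
          using exit_arc[OF _ rW' v(2)] by blast
        have bVT: "b \<in> VT" using ab sub by auto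
        show ?thesis
        proof (cases "\<exists>w \<in> V - X - f ` W. (f a, w) \<in> E")
          case True
          then obtain w where w: "w \<in> V - X - f ` W" "(f a, w) \<in> E" by blast
          let ?W = "insert b W" and ?f = "f(b := w)"
          have st': "state V E VT ET r X ?W ?f"
            unfolding state_def
          proof (intro conjI allI impI)
            show "?W \<subseteq> VT" using WVT bVT by simp
            show "r \<in> ?W" using rW' by simp
            fix u z assume "(u, z) \<in> ET" "z \<in> ?W"
            then show "u \<in> ?W" using anc indeg_le1[OF otr _ ab(1), of u] ab by auto
          next
            show "ug_connected ?W (ET \<inter> ?W \<times> ?W)"
              by (rule conn_ext[OF conn ab(2)]) (use ab in auto)
            show "inj_on ?f ?W" using inj w ab(3)
              by (auto simp: inj_on_def)
            show "?f ` ?W \<subseteq> V - X" using fW w ab(3) by auto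
            fix u z assume uz: "(u, z) \<in> ET" "u \<in> ?W" "z \<in> ?W"
            show "(?f u, ?f z) \<in> E"
            proof (cases "z = b")
              case True
              then have "u = a" using indeg_le1[OF otr _ ab(1), of u] uz by simp
              then show ?thesis using True w ab by auto
            next
              case zb: False
              then have "z \<in> W" using uz by simp
              then have "u \<in> W" using anc uz by blast
              then show ?thesis using arcs uz zb \<open>z \<in> W\<close> ab(3) by auto
            qed
          qed
          have "card ?W = card W + 1" using ab(3) fWfin by simp
          then show ?thesis
            by (intro less.hyps[OF _ st']) (use lt in auto)
        next
          case False
          define x0 where "x0 = f a"
          have x0: "x0 \<in> V - X" using fW ab(2) x0_def by auto
          define X' where "X' = insert x0 X"
          have cW1: "card W \<ge> 1" using Wne fWfin by (simp add: Suc_le_eq card_gt_0_iff)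
          have cWT: "card W \<le> card VT" using WVT fVT card_mono by blast
          have gx': "goodX V E VT X'" unfolding goodX_def
          proof (intro conjI ballI)
            show "X' \<subseteq> V" using XV x0 X'_def by auto
            have "card X' = card X + 1" using x0 fX X'_def by simp
            then show "2 * card X' \<le> card V" using lt cW1 X2 by simp
            fix x assume x: "x \<in> X'"
            show "card {y \<in> V - X'. (x, y) \<in> E} < card VT"
            proof (cases "x = x0")
              case True
              have "{y \<in> V - X'. (x, y) \<in> E} \<subseteq> f ` W - {x0}"
                using False True X'_def x0_def by auto
              hence "card {y \<in> V - X'. (x, y) \<in> E} \<le> card (f ` W - {x0})"
                using fWfin by (intro card_mono) auto
              also have "\<dots> = card W - 1" using ab(2) x0_def inj fWfin
                by (simp add: card_image)
              finally show ?thesis using cW1 cWT by simp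
            next
              case False
              hence xX: "x \<in> X" using x X'_def by simp
              have "card {y \<in> V - X'. (x, y) \<in> E} \<le> card {y \<in> V - X. (x, y) \<in> E}"
                using fV X'_def by (intro card_mono) auto
              then show ?thesis using Xc xX by force
            qed
          qed
          have "V - X' \<subset> V - X" using x0 X'_def by auto
          hence "card (V - X') < card (V - X)" using fV by (simp add: psubset_card_mono)
          then show ?thesis using IHX[OF gx'] by simp
        qed
      qed
    qed
  qed
qed

lemma outer:
  assumes dg: "digraph V E" and otr: "out_tree VT ET r" and noiso: "\<not> is_subgraph_iso VT ET V E"
  shows "goodX V E VT X \<Longrightarrow> concl V E VT ET"
proof (induction "card (V - X)" arbitrary: X rule: less_induct)
  case less
  have st: "state V E VT ET r X {} f" for f :: "'b \<Rightarrow> 'a"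
    using otr by (simp add: state_def ug_connected_def out_tree_def)
  show ?case
    by (rule inner[OF dg otr noiso less.prems less.hyps st]) auto
qed

theorem mainTheorem11:
  fixes V :: "'a set" and E :: "('a \<times> 'a) set"
    and VT :: "'b set" and ET :: "('b \<times> 'b) set"
  assumes "digraph V E"
    and "is_out_directed_tree VT ET"
    and "\<not> is_subgraph_iso VT ET V E"
  shows "\<exists>U X Y. U \<union> X \<union> Y = V \<and> U \<inter> X = {} \<and> U \<inter> Y = {} \<and> X \<inter> Y = {}
           \<and> (\<exists>W F. subtree W F VT ET \<and> embeds_onto W F V E U)
           \<and> card X = card Y
           \<and> (\<forall>x\<in>X. card {y\<in>Y. (x, y) \<in> E} < card VT)"
proof -
  obtain r where otr: "out_tree VT ET r" using assms(2) by (auto simp: is_out_directed_tree_def)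
  have "goodX V E VT {}" by (simp add: goodX_def)
  then have "concl V E VT ET" using outer[OF assms(1) otr assms(3)] by blast
  then show ?thesis by (simp add: concl_def)
qed

end
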